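(* Let $\phi=\tilde p/p$ be an irreducible rational inner function on $\mathbb{D}^3$ of degree $(m,n,1)$, written with $p(z)=p_1(z_1,z_2)+z_3p_2(z_1,z_2)$ and $\tilde p(z)=z_3\tilde p_1(z_1,z_2)+\tilde p_2(z_1,z_2)$. Let $\zeta\in\mathbb{T}^3\cap\mathcal{Z}_{\tilde p}$. If the vertical line $\{(\zeta_1,\zeta_2)\}\times\mathbb{T}$ is not contained in $\mathcal{Z}_{\tilde p}$, then there is a neighborhood $U\subseteq\mathbb{C}^3$ of $\zeta$ such that \[\mathcal{Z}_{\tilde p}\cap U=\{(z_1,z_2,\psi^0(z_1,z_2)):(z_1,z_2)\in V\}\] for some open $V\subseteq\mathbb{C}^2$, where $\psi^0:=-\tilde p_2/\tilde p_1$ is analytic near $(\zeta_1,\zeta_2)$.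
   Context: $\mathbb{D}^3$, $\mathbb{T}^3$: open unit tridisk and unit 3-torus. A rational inner function (RIF) is a rational function holomorphic on $\mathbb{D}^3$ with unimodular radial limits a.e. on $\mathbb{T}^3$; it is written $\phi=\tilde p/p$ with $p$ zero-free on $\mathbb{D}^3$, $p$ and $\tilde p$ without common factors, $\dim(\mathcal{Z}_p\cap\mathbb{T}^3)\le1$. Degree $(m,n,1)$ means maximal powers $m,n,1$ in $z_1,z_2,z_3$, and $\tilde p(z)=z_1^mz_2^nz_3\overline{p(1/\bar z_1,1/\bar z_2,1/\bar z_3)}$; then $\tilde p_j(z_1,z_2)=z_1^mz_2^n\overline{p_j(1/\bar z_1,1/\bar z_2)}$ for $j=1,2$, and $p_1,p_2$ (resp. $\tilde p_1,\tilde p_2$) share no common factors. $\mathcal{Z}_q$ denotes the zero set of a polynomial $q$. *)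

theory Defs
  imports "HOL-Analysis.Analysis" "HOL-Computational_Algebra.Computational_Algebra"
begin

text \<open>Polynomials in three complex variables are represented as iterated univariate
polynomials: the outermost variable is z3, the middle one z2, the innermost z1.
Polynomials in (z1,z2) have type complex poly poly (outer z2, inner z1).\<close>

type_synonym poly3 = "complex poly poly poly"
type_synonym poly2 = "complex poly poly"

definition eval2 :: "poly2 \<Rightarrow> complex \<Rightarrow> complex \<Rightarrow> complex" where
  "eval2 q z1 z2 = poly (poly q [:z2:]) z1"

definition eval3 :: "poly3 \<Rightarrow> complex \<Rightarrow> complex \<Rightarrow> complex \<Rightarrow> complex" where
  "eval3 p z1 z2 z3 = poly (poly (poly p [:[:z3:]:]) [:z2:]) z1"

definition coeff3 :: "poly3 \<Rightarrow> nat \<Rightarrow> nat \<Rightarrow> nat \<Rightarrow> complex" where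
  "coeff3 p i j k = coeff (coeff (coeff p k) j) i"

definition deg_z3 :: "poly3 \<Rightarrow> nat" where
  "deg_z3 p = degree p"

definition deg_z2 :: "poly3 \<Rightarrow> nat" where
  "deg_z2 p = Max ((\<lambda>k. degree (coeff p k)) ` {..degree p})"

definition deg_z1 :: "poly3 \<Rightarrow> nat" where
  "deg_z1 p = Max ((\<lambda>(k, j). degree (coeff (coeff p k) j)) ` ({..degree p} \<times> {..deg_z2 p}))"

text \<open>Reflection: refl3 m n l p (z) = z1^m z2^n z3^l conj(p(1/conj z1, 1/conj z2, 1/conj z3))\<close>
definition refl3 :: "nat \<Rightarrow> nat \<Rightarrow> nat \<Rightarrow> poly3 \<Rightarrow> poly3" where
  "refl3 m n l p = (\<Sum>i\<le>m. \<Sum>j\<le>n. \<Sum>k\<le>l.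
      monom (monom (monom (cnj (coeff3 p i j k)) (m - i)) (n - j)) (l - k))"

text \<open>Holomorphy (= analyticity) of a function of two complex variables on a set:
complex Fr\'echet differentiability at every point of an open set.\<close>
definition holo2_on :: "(complex \<times> complex \<Rightarrow> complex) \<Rightarrow> (complex \<times> complex) set \<Rightarrow> bool" where
  "holo2_on f S \<longleftrightarrow> open S \<and>
     (\<forall>w\<in>S. \<exists>a b. (f has_derivative (\<lambda>h. a * fst h + b * snd h)) (at w))"

end

theory Submission
  imports Defs
begin

definition cdiff :: "(complex \<times> complex \<Rightarrow> complex) \<Rightarrow> complex \<times> complex \<Rightarrow> bool" where
  "cdiff f w \<longleftrightarrow> (\<exists>a b. (f has_derivative (\<lambda>h. a * fst h + b * snd h)) (at w))"

lemma cdiff_const: "cdiff (\<lambda>w. c) w"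
  unfolding cdiff_def
  by (rule exI[of _ 0], rule exI[of _ 0]) (simp add: has_derivative_const)

lemma cdiff_snd: "cdiff snd w"
  unfolding cdiff_def
  by (rule exI[of _ 0], rule exI[of _ 1]) (simp add: has_derivative_snd)

lemma cdiff_add:
  assumes "cdiff f w" "cdiff g w" shows "cdiff (\<lambda>x. f x + g x) w"
proof -
  obtain a b where f: "(f has_derivative (\<lambda>h. a * fst h + b * snd h)) (at w)"
    using assms(1) unfolding cdiff_def by blast
  obtain c d where g: "(g has_derivative (\<lambda>h. c * fst h + d * snd h)) (at w)"
    using assms(2) unfolding cdiff_def by blast
  have "((\<lambda>x. f x + g x) has_derivative (\<lambda>h. (a+c) * fst h + (b+d) * snd h)) (at w)"
    using has_derivative_add[OF f g] by (simp add: algebra_simps)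
  then show ?thesis unfolding cdiff_def by blast
qed

lemma cdiff_mult:
  assumes "cdiff f w" "cdiff g w" shows "cdiff (\<lambda>x. f x * g x) w"
proof -
  obtain a b where f: "(f has_derivative (\<lambda>h. a * fst h + b * snd h)) (at w)"
    using assms(1) unfolding cdiff_def by blast
  obtain c d where g: "(g has_derivative (\<lambda>h. c * fst h + d * snd h)) (at w)"
    using assms(2) unfolding cdiff_def by blast
  have "((\<lambda>x. f x * g x) has_derivative
     (\<lambda>h. (f w * c + a * g w) * fst h + (f w * d + b * g w) * snd h)) (at w)"
    using has_derivative_mult[OF f g] by (simp add: algebra_simps)
  then show ?thesis unfolding cdiff_def by blast
qed

lemma cdiff_divide:
  assumes "cdiff f w" "cdiff g w" "g w \<noteq> 0" shows "cdiff (\<lambda>x. f x / g x) w"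
proof -
  obtain a b where f: "(f has_derivative (\<lambda>h. a * fst h + b * snd h)) (at w)"
    using assms(1) unfolding cdiff_def by blast
  obtain c d where g: "(g has_derivative (\<lambda>h. c * fst h + d * snd h)) (at w)"
    using assms(2) unfolding cdiff_def by blast
  have "((\<lambda>x. f x / g x) has_derivative
     (\<lambda>h. ((a * g w - f w * c) / (g w * g w)) * fst h + ((b * g w - f w * d) / (g w * g w)) * snd h)) (at w)"
    by (rule has_derivative_eq_rhs[OF has_derivative_divide'[OF f g assms(3)]])
       (use assms(3) in \<open>simp add: fun_eq_iff field_simps\<close>)
  then show ?thesis unfolding cdiff_def by blast
qed

lemma cdiff_poly_fst: "cdiff (\<lambda>x. poly q (fst x)) w"
proof -
  have "((\<lambda>x. poly q (fst x)) has_derivative (\<lambda>h. poly (pderiv q) (fst w) * fst h + 0 * snd h)) (at w)"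
  proof -
    have d: "(poly q has_derivative (\<lambda>h. poly (pderiv q) (fst w) * h)) (at (fst w))"
      using poly_DERIV[of q "fst w"] by (simp add: has_field_derivative_def)
    have "((\<lambda>x. poly q (fst x)) has_derivative (\<lambda>h. poly (pderiv q) (fst w) * fst h)) (at w)"
      using has_derivative_compose[OF has_derivative_fst[OF has_derivative_ident] d]
      by (simp add: o_def)
    then show ?thesis by simp
  qed
  then show ?thesis unfolding cdiff_def by blast
qed

lemma eval2_pCons: "eval2 (pCons a q) z1 z2 = poly a z1 + z2 * eval2 q z1 z2"
  unfolding eval2_def by simp

lemma cdiff_eval2: "cdiff (\<lambda>x. eval2 q (fst x) (snd x)) w"
proof (induction q rule: pCons_induct)
  case 0
  then show ?case by (simp add: eval2_def cdiff_const)
next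
  case (pCons a q)
  show ?case unfolding eval2_pCons
    by (intro cdiff_add cdiff_mult cdiff_poly_fst cdiff_snd pCons.IH)
qed

lemma cont_eval2: "continuous_on UNIV (\<lambda>x. eval2 q (fst x) (snd x))"
proof -
  have "\<forall>w\<in>UNIV. (\<lambda>x. eval2 q (fst x) (snd x)) differentiable at w"
    using cdiff_eval2[of q] unfolding cdiff_def differentiable_def by blast
  then show ?thesis by (intro differentiable_imp_continuous_on) (simp add: differentiable_on_def differentiable_at_withinI)
qed

lemma refl3_deg: "degree (refl3 m n 1 p) \<le> 1"
proof (rule degree_le, intro allI impI)
  fix i :: nat assume "1 < i"
  then show "coeff (refl3 m n 1 p) i = 0"
    unfolding refl3_def by (simp add: coeff_sum coeff_monom)
qed

lemma eval3_lin:
  assumes "degree pt \<le> 1"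
  shows "eval3 pt z1 z2 z3 = eval2 (coeff pt 0) z1 z2 + z3 * eval2 (coeff pt 1) z1 z2"
proof -
  have "poly pt x = coeff pt 0 + x * coeff pt 1" for x
  proof -
    have "poly pt x = (\<Sum>i\<le>1. coeff pt i * x ^ i)"
      unfolding poly_altdef
      by (rule sum.mono_neutral_left) (use assms in \<open>auto simp: coeff_eq_0\<close>)
    then show ?thesis by simp
  qed
  then show ?thesis unfolding eval3_def eval2_def by simp
qed

theorem lemma3p1:
  fixes p :: poly3 and m n :: nat and \<zeta>1 \<zeta>2 \<zeta>3 :: complex
  defines "pt \<equiv> refl3 m n 1 p"
  assumes irred: "irreducible p"
    and deg: "deg_z1 p = m" "deg_z2 p = n" "deg_z3 p = 1"
    and zero_free: "\<forall>z1 z2 z3. norm z1 < 1 \<and> norm z2 < 1 \<and> norm z3 < 1 \<longrightarrow> eval3 p z1 z2 z3 \<noteq> 0"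
    and cop: "coprime p pt"
    and torus: "norm \<zeta>1 = 1" "norm \<zeta>2 = 1" "norm \<zeta>3 = 1"
    and zero: "eval3 pt \<zeta>1 \<zeta>2 \<zeta>3 = 0"
    and not_line: "\<not> (\<forall>t. norm t = 1 \<longrightarrow> eval3 pt \<zeta>1 \<zeta>2 t = 0)"
  shows "\<exists>U V. open U \<and> (\<zeta>1, \<zeta>2, \<zeta>3) \<in> U \<and> open V \<and>
           {(z1, z2, z3). eval3 pt z1 z2 z3 = 0} \<inter> U =
             {(z1, z2, - eval2 (coeff pt 0) z1 z2 / eval2 (coeff pt 1) z1 z2) | z1 z2. (z1, z2) \<in> V}
         \<and> (\<exists>W. (\<zeta>1, \<zeta>2) \<in> W \<and>
               holo2_on (\<lambda>(z1, z2). - eval2 (coeff pt 0) z1 z2 / eval2 (coeff pt 1) z1 z2) W)"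
proof -
  have lin: "\<And>z1 z2 z3. eval3 pt z1 z2 z3 = eval2 (coeff pt 0) z1 z2 + z3 * eval2 (coeff pt 1) z1 z2"
    unfolding pt_def by (rule eval3_lin[OF refl3_deg])
  define W where "W = {w. eval2 (coeff pt 1) (fst w) (snd w) \<noteq> 0}"
  have openW: "open W" unfolding W_def
    by (rule open_Collect_neq[OF cont_eval2 continuous_on_const])
  have inW: "(\<zeta>1, \<zeta>2) \<in> W"
  proof (rule ccontr)
    assume "(\<zeta>1, \<zeta>2) \<notin> W"
    then have h1: "eval2 (coeff pt 1) \<zeta>1 \<zeta>2 = 0" unfolding W_def by simp
    with zero lin have "eval2 (coeff pt 0) \<zeta>1 \<zeta>2 = 0" by simp
    with h1 lin not_line show False by simp
  qed
  define U where "U = {x :: complex \<times> complex \<times> complex. eval2 (coeff pt 1) (fst x) (fst (snd x)) \<noteq> 0}"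
  have openU: "open U" unfolding U_def
  proof (rule open_Collect_neq[OF _ continuous_on_const])
    have "continuous_on UNIV ((\<lambda>x. eval2 (coeff pt 1) (fst x) (snd x)) \<circ> (\<lambda>x :: complex \<times> complex \<times> complex. (fst x, fst (snd x))))"
      by (rule continuous_on_compose) (auto intro!: continuous_intros cont_eval2[THEN continuous_on_subset])
    then show "continuous_on UNIV (\<lambda>x :: complex \<times> complex \<times> complex. eval2 (coeff pt 1) (fst x) (fst (snd x)))"
      by (simp add: o_def)
  qed
  have inU: "(\<zeta>1, \<zeta>2, \<zeta>3) \<in> U" unfolding U_def using inW W_def by simp
  have eq: "{(z1, z2, z3). eval3 pt z1 z2 z3 = 0} \<inter> U =
             {(z1, z2, - eval2 (coeff pt 0) z1 z2 / eval2 (coeff pt 1) z1 z2) | z1 z2. (z1, z2) \<in> W}"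
  proof (intro set_eqI iffI)
    fix x assume "x \<in> {(z1, z2, z3). eval3 pt z1 z2 z3 = 0} \<inter> U"
    then obtain z1 z2 z3 where x: "x = (z1, z2, z3)" and e: "eval3 pt z1 z2 z3 = 0"
      and w: "(z1, z2) \<in> W" unfolding U_def W_def by auto
    from w have nz: "eval2 (coeff pt 1) z1 z2 \<noteq> 0" unfolding W_def by simp
    from e lin have "z3 = - eval2 (coeff pt 0) z1 z2 / eval2 (coeff pt 1) z1 z2"
      using nz by (simp add: field_simps add_eq_0_iff)
    then show "x \<in> {(z1, z2, - eval2 (coeff pt 0) z1 z2 / eval2 (coeff pt 1) z1 z2) | z1 z2. (z1, z2) \<in> W}"
      using x w by blast
  next
    fix x assume "x \<in> {(z1, z2, - eval2 (coeff pt 0) z1 z2 / eval2 (coeff pt 1) z1 z2) | z1 z2. (z1, z2) \<in> W}"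
    then obtain z1 z2 where x: "x = (z1, z2, - eval2 (coeff pt 0) z1 z2 / eval2 (coeff pt 1) z1 z2)"
      and w: "(z1, z2) \<in> W" by blast
    from w have nz: "eval2 (coeff pt 1) z1 z2 \<noteq> 0" unfolding W_def by simp
    show "x \<in> {(z1, z2, z3). eval3 pt z1 z2 z3 = 0} \<inter> U"
      using x w nz lin unfolding U_def W_def by (simp add: field_simps)
  qed
  have holo: "holo2_on (\<lambda>(z1, z2). - eval2 (coeff pt 0) z1 z2 / eval2 (coeff pt 1) z1 z2) W"
    unfolding holo2_on_def
  proof (intro conjI ballI openW)
    fix w assume "w \<in> W"
    then have nz: "eval2 (coeff pt 1) (fst w) (snd w) \<noteq> 0" unfolding W_def by simp
    have "cdiff (\<lambda>x. (- eval2 (coeff pt 0) (fst x) (snd x)) / eval2 (coeff pt 1) (fst x) (snd x)) w"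
    proof (rule cdiff_divide[OF _ cdiff_eval2 nz])
      have "cdiff (\<lambda>x. (-1) * eval2 (coeff pt 0) (fst x) (snd x)) w"
        by (intro cdiff_mult cdiff_const cdiff_eval2)
      then show "cdiff (\<lambda>x. - eval2 (coeff pt 0) (fst x) (snd x)) w" by simp
    qed
    moreover have "(\<lambda>(z1, z2). - eval2 (coeff pt 0) z1 z2 / eval2 (coeff pt 1) z1 z2) =
       (\<lambda>x. (- eval2 (coeff pt 0) (fst x) (snd x)) / eval2 (coeff pt 1) (fst x) (snd x))"
      by (auto simp: case_prod_beta)
    ultimately show "\<exists>a b. ((\<lambda>(z1, z2). - eval2 (coeff pt 0) z1 z2 / eval2 (coeff pt 1) z1 z2)
        has_derivative (\<lambda>h. a * fst h + b * snd h)) (at w)"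
      unfolding cdiff_def by simp
  qed
  show ?thesis
    using openU inU openW eq holo inW by blast
qed

end
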